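(* Let $\mathcal Q\in\mathbb M_{\mathrm{TS}}$ and $v\in\mathsf T(\mathcal Q)$, and let $Q_v$ be the unique element of $\mathcal Q$ with $v\in\mathsf T(Q_v)$. Then there exist unique parameters $j\in\{1,2\}$ and $q\in(0,1)$ such that $v\in\mathsf V(Q')$ for every $Q'\in\mathrm{bisect}_{j,q}(Q_v)$. For these parameters, the mesh $\tilde{\mathcal Q}=(\mathcal Q\setminus\{Q_v\})\cup\mathrm{bisect}_{j,q}(Q_v)$ belongs to $\mathbb M_{\mathrm{TS}}$ and satisfies $v\notin\mathsf T(\tilde{\mathcal Q})$.
   Context: Let $M,N\in\mathbb N$ and $\mathcal Q_0=\{[m-1,m]\times[n-1,n]: m\in\{1,\dots,M\},\ n\in\{1,\dots,N\}\}$. For a rectangle $Q=[x,x+\tilde x]\times[y,y+\tilde y]$, $j\in\{1,2\}$ and $0<q<1$, define $\mathrm{bisect}_{j,q}(Q)=\{[x,x+q\tilde x]\times[y,y+\tilde y],\ [x+q\tilde x,x+\tilde x]\times[y,y+\tilde y]\}$ if $j=1$ and $\mathrm{bisect}_{j,q}(Q)=\{[x,x+\tilde x]\times[y,y+q\tilde y],\ [x,x+\tilde x]\times[y+q\tilde y,y+\tilde y]\}$ if $j=2$. The mesh class $\mathbb M_{\mathrm{TS}}$ is the smallest set of finite sets of closed rectangles such that $\mathcal Q_0\in\mathbb M_{\mathrm{TS}}$ and, whenever $\mathcal Q\in\mathbb M_{\mathrm{TS}}$, $Q\in\mathcal Q$, $j\in\{1,2\}$, $0<q<1$, also $(\mathcal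 Q\setminus\{Q\})\cup\mathrm{bisect}_{j,q}(Q)\in\mathbb M_{\mathrm{TS}}$. For $Q=[x,x+\tilde x]\times[y,y+\tilde y]$ define the vertex set $\mathsf V(Q)=\{x,x+\tilde x\}\times\{y,y+\tilde y\}$. For a mesh $\mathcal Q$, $\mathsf V(\mathcal Q)=\bigcup_{Q\in\mathcal Q}\mathsf V(Q)$; for $Q\in\mathcal Q$, $\mathsf T(Q)=(\mathsf V(\mathcal Q)\cap Q)\setminus\mathsf V(Q)$ and $\mathsf T(\mathcal Q)=\bigcup_{Q\in\mathcal Q}\mathsf T(Q)$ (T-junctions). (For each $v\in\mathsf T(\mathcal Q)$ there is exactly one $Q_v\in\mathcal Q$ with $v\in\mathsf T(Q_v)$.) *)

theory Defs
  imports Main "HOL.Real"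
begin

text \<open>A closed axis-parallel rectangle [x,x+xt] x [y,y+yt] is represented by its
  parameter tuple (x, xt, y, yt).\<close>
type_synonym rect = "real \<times> real \<times> real \<times> real"

fun rset :: "rect \<Rightarrow> (real \<times> real) set" where
  "rset (x, xt, y, yt) = {x..x+xt} \<times> {y..y+yt}"

fun verts :: "rect \<Rightarrow> (real \<times> real) set" where
  "verts (x, xt, y, yt) = {x, x+xt} \<times> {y, y+yt}"

fun bisect :: "nat \<Rightarrow> real \<Rightarrow> rect \<Rightarrow> rect set" where
  "bisect j q (x, xt, y, yt) =
     (if j = 1 then {(x, q*xt, y, yt), (x + q*xt, xt - q*xt, y, yt)}
      else {(x, xt, y, q*yt), (x, xt, y + q*yt, yt - q*yt)})"

definition Q0 :: "nat \<Rightarrow> nat \<Rightarrow> rect set" where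
  "Q0 M N = {(real m - 1, 1, real n - 1, 1) | m n. m \<in> {1..M} \<and> n \<in> {1..N}}"

inductive_set MTS :: "nat \<Rightarrow> nat \<Rightarrow> rect set set" for M N where
  init: "Q0 M N \<in> MTS M N"
| refine: "\<lbrakk>\<Q> \<in> MTS M N; Q \<in> \<Q>; j \<in> {1,2}; 0 < q; q < 1\<rbrakk>
           \<Longrightarrow> (\<Q> - {Q}) \<union> bisect j q Q \<in> MTS M N"

definition VM :: "rect set \<Rightarrow> (real \<times> real) set" where
  "VM \<Q> = (\<Union>Q\<in>\<Q>. verts Q)"

definition TQ :: "rect set \<Rightarrow> rect \<Rightarrow> (real \<times> real) set" where
  "TQ \<Q> Q = (VM \<Q> \<inter> rset Q) - verts Q"

definition TM :: "rect set \<Rightarrow> (real \<times> real) set" where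
  "TM \<Q> = (\<Union>Q\<in>\<Q>. TQ \<Q> Q)"

end

theory Submission
  imports Defs
begin

fun pos :: "rect \<Rightarrow> bool" where "pos (x,xt,y,yt) = (0<xt \<and> 0<yt)"
fun dj :: "rect \<Rightarrow> rect \<Rightarrow> bool" where
  "dj (x,xt,y,yt) (x',xt',y',yt') = (x+xt \<le> x' \<or> x'+xt' \<le> x \<or> y+yt \<le> y' \<or> y'+yt' \<le> y)"
definition inv :: "rect set \<Rightarrow> bool" where
  "inv Qs = ((\<forall>R\<in>Qs. pos R) \<and> (\<forall>R\<in>Qs. \<forall>S\<in>Qs. R\<noteq>S \<longrightarrow> dj R S))"

lemma dj_sym: "dj R S = dj S R"
  by (cases R; cases S) auto

lemma piece:
  assumes "P \<in> bisect j q Q" "pos Q" "0<q" "q<1"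
  shows "pos P \<and> (\<forall>S. dj Q S \<longrightarrow> dj P S)"
proof -
  obtain x xt y yt where Q: "Q = (x,xt,y,yt)" by (cases Q) auto
  have h: "0 < q*xt" "q*xt < xt" "0 < q*yt" "q*yt < yt" using assms Q by auto
  show ?thesis
  proof (intro conjI allI impI)
    show "pos P" using assms h Q by (auto split: if_splits)
    fix S assume "dj Q S"
    then show "dj P S" using assms h Q by (cases S) (auto split: if_splits)
  qed
qed

lemma pieces:
  assumes "P \<in> bisect j q Q" "P' \<in> bisect j q Q" "P \<noteq> P'" "pos Q" "0<q" "q<1"
  shows "dj P P'"
proof -
  obtain x xt y yt where Q: "Q = (x,xt,y,yt)" by (cases Q) auto
  show ?thesis using assms Q by (auto split: if_splits)
qed

lemma inv_MTS: "Qs \<in> MTS M N \<Longrightarrow> inv Qs"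
proof (induction rule: MTS.induct)
  case init
  show ?case unfolding inv_def Q0_def
  proof (intro conjI ballI impI)
    fix R S :: rect assume R: "R \<in> {(real m - 1, 1, real n - 1, 1) |m n. m \<in> {1..M} \<and> n \<in> {1..N}}"
      and S: "S \<in> {(real m - 1, 1, real n - 1, 1) |m n. m \<in> {1..M} \<and> n \<in> {1..N}}"
      and ne: "R \<noteq> S"
    from R obtain m n where R': "R = (real m - 1, 1, real n - 1, 1)" by auto
    from S obtain m' n' where S': "S = (real m' - 1, 1, real n' - 1, 1)" by auto
    have "m \<noteq> m' \<or> n \<noteq> n'" using ne R' S' by auto
    then have "m + 1 \<le> m' \<or> m' + 1 \<le> m \<or> n + 1 \<le> n' \<or> n' + 1 \<le> n" by auto
    then have "real m + 1 \<le> real m' \<or> real m' + 1 \<le> real m \<or> real n + 1 \<le> real n' \<or> real n' + 1 \<le> real n"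
      by (metis of_nat_1 of_nat_add of_nat_le_iff)
    then show "dj R S" using R' S' by auto
  qed auto
next
  case (refine Qs Q j q)
  have pQ: "pos Q" using refine unfolding inv_def by auto
  show ?case unfolding inv_def
  proof (intro conjI ballI impI)
    fix R assume "R \<in> Qs - {Q} \<union> bisect j q Q"
    then show "pos R"
    proof
      assume "R \<in> bisect j q Q" then show ?thesis using piece[OF _ pQ refine(4) refine(5)] by blast
    qed (use refine in \<open>auto simp: inv_def\<close>)
  next
    fix R S assume R: "R \<in> Qs - {Q} \<union> bisect j q Q" and S: "S \<in> Qs - {Q} \<union> bisect j q Q"
      and ne: "R \<noteq> S"
    have dQ: "\<And>T. T \<in> Qs - {Q} \<Longrightarrow> dj Q T" using refine unfolding inv_def by auto
    show "dj R S"
    proof (cases "R \<in> bisect j q Q")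
      case True
      note RB = True
      show ?thesis
      proof (cases "S \<in> bisect j q Q")
        case True
        then show ?thesis using pieces[OF RB True ne pQ] refine by auto
      next
        case False
        then have "S \<in> Qs - {Q}" using S by auto
        then show ?thesis using piece[OF RB pQ refine(4) refine(5)] dQ by blast
      qed
    next
      case False
      then have R': "R \<in> Qs - {Q}" using R by auto
      show ?thesis
      proof (cases "S \<in> bisect j q Q")
        case True
        then show ?thesis using piece[OF True pQ refine(4) refine(5)] dQ[OF R'] dj_sym by metis
      next
        case False
        then have "S \<in> Qs - {Q}" using S by auto
        then show ?thesis using R' ne refine unfolding inv_def by auto
      qed
    qed
  qed
qed

lemma geom:
  fixes a b x xt y yt rx rxt ry ryt sx sxt sy syt :: real
  assumes "0<xt" "0<yt" "0<rxt" "0<ryt" "0<sxt" "0<syt"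
   "x \<le> a" "a \<le> x+xt" "y \<le> b" "b \<le> y+yt" "\<not>((a=x \<or> a=x+xt) \<and> (b=y \<or> b=y+yt))"
   "rx \<le> a" "a \<le> rx+rxt" "ry \<le> b" "b \<le> ry+ryt" "\<not>((a=rx \<or> a=rx+rxt) \<and> (b=ry \<or> b=ry+ryt))"
   "a=sx \<or> a=sx+sxt" "b=sy \<or> b=sy+syt"
   "x+xt \<le> sx \<or> sx+sxt \<le> x \<or> y+yt \<le> sy \<or> sy+syt \<le> y"
   "x+xt \<le> rx \<or> rx+rxt \<le> x \<or> y+yt \<le> ry \<or> ry+ryt \<le> y"
   "sx+sxt \<le> rx \<or> rx+rxt \<le> sx \<or> sy+syt \<le> ry \<or> ry+ryt \<le> sy"
  shows False
  using assms by smt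

lemma cases2:
  fixes a b x xt y yt sx sxt sy syt :: real
  assumes "0<xt" "0<yt" "0<sxt" "0<syt"
   "x \<le> a" "a \<le> x+xt" "y \<le> b" "b \<le> y+yt" "\<not>((a=x \<or> a=x+xt) \<and> (b=y \<or> b=y+yt))"
   "a=sx \<or> a=sx+sxt" "b=sy \<or> b=sy+syt"
   "x+xt \<le> sx \<or> sx+sxt \<le> x \<or> y+yt \<le> sy \<or> sy+syt \<le> y"
  shows "(x<a \<and> a<x+xt \<and> (b=y \<or> b=y+yt)) \<or> (y<b \<and> b<y+yt \<and> (a=x \<or> a=x+xt))"
  using assms by smt

theorem mainTheorem2:
  fixes M N :: nat and \<Q> :: "rect set" and v :: "real \<times> real" and Qv :: rect
  assumes "\<Q> \<in> MTS M N"
    and "v \<in> TM \<Q>"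
    and "Qv \<in> \<Q>" and "v \<in> TQ \<Q> Qv"
  shows "(\<exists>!(j, q). j \<in> {1,2} \<and> 0 < q \<and> q < 1 \<and> (\<forall>Q'\<in>bisect j q Qv. v \<in> verts Q'))
       \<and> (\<forall>j q. j \<in> {1,2} \<and> 0 < q \<and> q < 1 \<and> (\<forall>Q'\<in>bisect j q Qv. v \<in> verts Q')
            \<longrightarrow> ((\<Q> - {Qv}) \<union> bisect j q Qv \<in> MTS M N
                 \<and> v \<notin> TM ((\<Q> - {Qv}) \<union> bisect j q Qv)))"
proof -
  have I: "inv \<Q>" using inv_MTS assms(1) by blast
  obtain x xt y yt where Qv: "Qv = (x,xt,y,yt)" by (cases Qv) auto
  obtain a b where v: "v = (a,b)" by (cases v) auto
  have vT: "v \<in> VM \<Q>" "v \<in> rset Qv" "v \<notin> verts Qv" using assms(4) unfolding TQ_def by auto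
  then obtain S where S: "S \<in> \<Q>" "v \<in> verts S" unfolding VM_def by auto
  obtain sx sxt sy syt where Sd: "S = (sx,sxt,sy,syt)" by (cases S) auto
  have SQ: "S \<noteq> Qv" using S vT by auto
  have pQ: "0<xt" "0<yt" using I assms(3) Qv unfolding inv_def by fastforce+
  have pS: "0<sxt" "0<syt" using I S Sd unfolding inv_def by fastforce+
  have dQS: "x+xt \<le> sx \<or> sx+sxt \<le> x \<or> y+yt \<le> sy \<or> sy+syt \<le> y"
    using I S assms(3) SQ Qv Sd unfolding inv_def by fastforce
  have h1: "x \<le> a" "a \<le> x+xt" "y \<le> b" "b \<le> y+yt" using vT Qv v by auto
  have h2: "\<not>((a=x \<or> a=x+xt) \<and> (b=y \<or> b=y+yt))" using vT Qv v by auto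
  have h3: "a=sx \<or> a=sx+sxt" "b=sy \<or> b=sy+syt" using S Sd v by auto
  have cs: "(x<a \<and> a<x+xt \<and> (b=y \<or> b=y+yt)) \<or> (y<b \<and> b<y+yt \<and> (a=x \<or> a=x+xt))"
    using cases2[OF pQ pS h1 h2 h3 dQS] .
  let ?P = "\<lambda>j q. j \<in> {1::nat,2} \<and> 0 < q \<and> q < (1::real) \<and> (\<forall>Q'\<in>bisect j q Qv. v \<in> verts Q')"
  have part1: "\<exists>!(j, q). ?P j q"
    using cs
  proof
    assume A: "x<a \<and> a<x+xt \<and> (b=y \<or> b=y+yt)"
    define q0 where "q0 = (a-x)/xt"
    have qx: "q0*xt = a-x" using pQ unfolding q0_def by auto
    have q01: "0 < q0" "q0 < 1" using A pQ unfolding q0_def by (auto simp: field_simps)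
    show ?thesis
    proof (rule ex1I[of _ "(1,q0)"])
      show "case (1, q0) of (j, q) \<Rightarrow> ?P j q" using q01 qx A Qv v by auto
    next
      fix p assume p: "case p of (j, q) \<Rightarrow> ?P j q"
      obtain j q where pd: "p = (j,q)" by (cases p) auto
      have Pjq: "?P j q" using p pd by auto
      show "p = (1,q0)"
      proof (cases "j = 1")
        case True
        then have "v \<in> verts (x, q*xt, y, yt)" using Pjq Qv by auto
        then have "a = x + q*xt" using A v by auto
        then have "q*xt = q0*xt" using qx by auto
        then have "q = q0" using pQ by auto
        then show ?thesis using pd True by auto
      next
        case False
        then have "v \<in> verts (x, xt, y, q*yt)" using Pjq Qv by auto
        then show ?thesis using A v by auto
      qed
    qed
  next
    assume A: "y<b \<and> b<y+yt \<and> (a=x \<or> a=x+xt)"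
    define q0 where "q0 = (b-y)/yt"
    have qx: "q0*yt = b-y" using pQ unfolding q0_def by auto
    have q01: "0 < q0" "q0 < 1" using A pQ unfolding q0_def by (auto simp: field_simps)
    show ?thesis
    proof (rule ex1I[of _ "(2,q0)"])
      show "case (2, q0) of (j, q) \<Rightarrow> ?P j q" using q01 qx A Qv v by auto
    next
      fix p assume p: "case p of (j, q) \<Rightarrow> ?P j q"
      obtain j q where pd: "p = (j,q)" by (cases p) auto
      have Pjq: "?P j q" using p pd by auto
      show "p = (2,q0)"
      proof (cases "j = 1")
        case False
        then have j2: "j = 2" using Pjq by auto
        then have "v \<in> verts (x, xt, y, q*yt)" using Pjq Qv by auto
        then have "b = y + q*yt" using A v by auto
        then have "q*yt = q0*yt" using qx by auto
        then have "q = q0" using pQ by auto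
        then show ?thesis using pd j2 by auto
      next
        case True
        then have "v \<in> verts (x, q*xt, y, yt)" "v \<in> verts (x + q*xt, xt - q*xt, y, yt)"
          using Pjq Qv by auto
        then show ?thesis using A v by auto
      qed
    qed
  qed
  have part2: "?P j q \<longrightarrow> ((\<Q> - {Qv}) \<union> bisect j q Qv \<in> MTS M N
                 \<and> v \<notin> TM ((\<Q> - {Qv}) \<union> bisect j q Qv))" for j q
  proof
    assume Pjq: "?P j q"
    show "(\<Q> - {Qv}) \<union> bisect j q Qv \<in> MTS M N \<and> v \<notin> TM ((\<Q> - {Qv}) \<union> bisect j q Qv)"
    proof
      show "(\<Q> - {Qv}) \<union> bisect j q Qv \<in> MTS M N"
        using MTS.refine[OF assms(1) assms(3)] Pjq by auto
    next
      have "v \<notin> TQ ((\<Q> - {Qv}) \<union> bisect j q Qv) R" if R: "R \<in> (\<Q> - {Qv}) \<union> bisect j q Qv" for R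
      proof (cases "R \<in> bisect j q Qv")
        case True
        then show ?thesis using Pjq unfolding TQ_def by auto
      next
        case False
        then have R': "R \<in> \<Q>" "R \<noteq> Qv" using R by auto
        obtain rx rxt ry ryt where Rd: "R = (rx,rxt,ry,ryt)" by (cases R) auto
        show ?thesis
        proof
          assume "v \<in> TQ ((\<Q> - {Qv}) \<union> bisect j q Qv) R"
          then have vR: "v \<in> rset R" "v \<notin> verts R" unfolding TQ_def by auto
          have RS: "R \<noteq> S" using vR S by auto
          have pR: "0<rxt" "0<ryt" using I R' Rd unfolding inv_def by fastforce+
          have g1: "rx \<le> a" "a \<le> rx+rxt" "ry \<le> b" "b \<le> ry+ryt" using vR Rd v by auto
          have g2: "\<not>((a=rx \<or> a=rx+rxt) \<and> (b=ry \<or> b=ry+ryt))" using vR Rd v by auto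
          have dQR: "x+xt \<le> rx \<or> rx+rxt \<le> x \<or> y+yt \<le> ry \<or> ry+ryt \<le> y"
            using I R' assms(3) Qv Rd unfolding inv_def by fastforce
          have dSR: "sx+sxt \<le> rx \<or> rx+rxt \<le> sx \<or> sy+syt \<le> ry \<or> ry+ryt \<le> sy"
            using I R' S RS Sd Rd unfolding inv_def by fastforce
          show False using geom[OF pQ pR pS h1 h2 g1 g2 h3 dQS dQR dSR] .
        qed
      qed
      then show "v \<notin> TM ((\<Q> - {Qv}) \<union> bisect j q Qv)" unfolding TM_def by blast
    qed
  qed
  show ?thesis using part1 part2 by blast
qed

end
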